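(* Let $P$ be a pattern, $S$ a schedule for $P$, and $L$ the relation set produced by the restriction generation procedure. Every pair in $L$ has the form $(S[a],S[b])$ with $a<b$. For each $k\in\{0,\dots,n-1\}$ such that some pair $(S[z],S[k])$ lies in $L$, let $c_k$ be the largest index $z$ with $(S[z],S[k])\in L$, and let $L'=\{(S[c_k],S[k])\}$ be the set of these chosen pairs. Then for every map $f:V(P)\to\mathbb{R}$, if $f(S[c_k])>f(S[k])$ for every chosen pair $(S[c_k],S[k])\in L'$, then $f(u)>f(w)$ for every $(u,w)\in L$.
   Context: A pattern $P$ is a finite simple connected graph on $n$ labeled vertices; $\mathrm{Aut}(P)$ is its automorphism group (bijections $V(P)\to V(P)$ preserving adjacency and non-adjacency). A schedule for $P$ is a sequence $S=(S[0],\dots,S[n-1])$ listing every vertex of $P$ exactly once such that each $S[k]$ with $k\ge 1$ is adjacent in $P$ to some $S[j]$ with $j<k$. Restriction generation procedure: set $A_0=\mathrm{Aut}(P)$ and, for $i=0,1,\dots,n-1$, add to $L$ every pair $(S[i],x(S[i]))$ with $x\in A_i$ and $x(S[i])\neq S[i]$, then set $A_{i+1}=\{x\in A_i : x(S[i])=S[i]\}$. Equivalently, $L=\{(S[i],x(S[i])) : 0\le i<n,\ x\in\mathrm{Aut}(P),\ x(S[j])=S[j]\text{ for all } j<i,\ x(S[i])\ne S[i]\}$. *)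

theory Defs
  imports Complex_Main
begin

definition pattern :: "'a set \<Rightarrow> ('a \<Rightarrow> 'a \<Rightarrow> bool) \<Rightarrow> bool" where
  "pattern V E \<longleftrightarrow> finite V \<and> V \<noteq> {}
     \<and> (\<forall>u v. E u v \<longrightarrow> u \<in> V \<and> v \<in> V)
     \<and> (\<forall>u v. E u v \<longrightarrow> E v u)
     \<and> (\<forall>u. \<not> E u u)
     \<and> (\<forall>u\<in>V. \<forall>v\<in>V. (u, v) \<in> {(a, b). E a b}\<^sup>*)"

definition aut :: "'a set \<Rightarrow> ('a \<Rightarrow> 'a \<Rightarrow> bool) \<Rightarrow> ('a \<Rightarrow> 'a) set" where
  "aut V E = {x. bij_betw x V V \<and> (\<forall>v. v \<notin> V \<longrightarrow> x v = v)
               \<and> (\<forall>u\<in>V. \<forall>v\<in>V. E u v \<longleftrightarrow> E (x u) (x v))}"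

definition schedule :: "'a set \<Rightarrow> ('a \<Rightarrow> 'a \<Rightarrow> bool) \<Rightarrow> 'a list \<Rightarrow> bool" where
  "schedule V E S \<longleftrightarrow> distinct S \<and> set S = V
     \<and> (\<forall>k. 0 < k \<and> k < length S \<longrightarrow> (\<exists>j<k. E (S ! j) (S ! k)))"

definition restrictions :: "'a set \<Rightarrow> ('a \<Rightarrow> 'a \<Rightarrow> bool) \<Rightarrow> 'a list \<Rightarrow> ('a \<times> 'a) set" where
  "restrictions V E S = {(S ! i, x (S ! i)) | i x. i < length S \<and> x \<in> aut V E
       \<and> (\<forall>j<i. x (S ! j) = S ! j) \<and> x (S ! i) \<noteq> S ! i}"

definition chosen_index :: "('a \<times> 'a) set \<Rightarrow> 'a list \<Rightarrow> nat \<Rightarrow> nat" where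
  "chosen_index L S k = Max {z. z < length S \<and> (S ! z, S ! k) \<in> L}"

definition chosen_pairs :: "('a \<times> 'a) set \<Rightarrow> 'a list \<Rightarrow> ('a \<times> 'a) set" where
  "chosen_pairs L S = {(S ! chosen_index L S k, S ! k) | k. k < length S
       \<and> (\<exists>z<length S. (S ! z, S ! k) \<in> L)}"

end

theory Submission
  imports Defs
begin

lemma aut_inv:
  assumes "x \<in> aut V E"
  shows "\<exists>y\<in>aut V E. \<forall>v\<in>V. y (x v) = v"
proof -
  have bx: "bij_betw x V V" and out: "\<forall>v. v \<notin> V \<longrightarrow> x v = v"
    and ad: "\<forall>u\<in>V. \<forall>v\<in>V. E u v \<longleftrightarrow> E (x u) (x v)" using assms by (auto simp: aut_def)
  define y where "y = (\<lambda>v. if v \<in> V then inv_into V x v else v)"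
  have bi: "bij_betw (inv_into V x) V V" using bij_betw_inv_into[OF bx] .
  have by': "bij_betw y V V" using bi by (rule bij_betw_cong[THEN iffD1, rotated]) (simp add: y_def)
  have yV: "\<And>u. u \<in> V \<Longrightarrow> y u \<in> V" using by' bij_betwE by blast
  have xy: "\<And>u. u \<in> V \<Longrightarrow> x (y u) = u"
    using bx by (simp add: y_def bij_betw_def f_inv_into_f)
  have "\<forall>u\<in>V. \<forall>v\<in>V. E u v \<longleftrightarrow> E (y u) (y v)"
  proof (intro ballI)
    fix u v assume "u \<in> V" "v \<in> V"
    thus "E u v \<longleftrightarrow> E (y u) (y v)" using ad yV xy by metis
  qed
  hence "y \<in> aut V E" using by' by (auto simp: aut_def y_def)
  moreover have "\<forall>v\<in>V. y (x v) = v"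
    using bx by (auto simp: y_def bij_betw_def bij_betwE)
  ultimately show ?thesis by blast
qed

lemma aut_comp:
  assumes "x \<in> aut V E" "y \<in> aut V E"
  shows "y \<circ> x \<in> aut V E"
proof -
  have bx: "bij_betw x V V" and ox: "\<forall>v. v \<notin> V \<longrightarrow> x v = v"
    and ax: "\<forall>u\<in>V. \<forall>v\<in>V. E u v \<longleftrightarrow> E (x u) (x v)" using assms(1) unfolding aut_def by auto
  have by': "bij_betw y V V" and oy: "\<forall>v. v \<notin> V \<longrightarrow> y v = v"
    and ay: "\<forall>u\<in>V. \<forall>v\<in>V. E u v \<longleftrightarrow> E (y u) (y v)" using assms(2) unfolding aut_def by auto
  have xV: "\<And>u. u \<in> V \<Longrightarrow> x u \<in> V" using bx bij_betwE by blast
  have b: "bij_betw (y \<circ> x) V V" using bij_betw_trans[OF bx by'] .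
  have o: "\<forall>v. v \<notin> V \<longrightarrow> (y \<circ> x) v = v" using ox oy by simp
  have a: "\<forall>u\<in>V. \<forall>v\<in>V. E u v \<longleftrightarrow> E ((y \<circ> x) u) ((y \<circ> x) v)"
  proof (intro ballI)
    fix u v assume "u \<in> V" "v \<in> V"
    thus "E u v \<longleftrightarrow> E ((y \<circ> x) u) ((y \<circ> x) v)" using ax ay xV by simp
  qed
  show ?thesis unfolding aut_def mem_Collect_eq using b o a by blast
qed

lemma L_iff:
  assumes sch: "schedule V E S" and a: "a < length S" and b: "b < length S"
  shows "(S!a, S!b) \<in> restrictions V E S \<longleftrightarrow>
     (\<exists>x\<in>aut V E. (\<forall>j<a. x (S!j) = S!j) \<and> x (S!a) = S!b \<and> S!b \<noteq> S!a)"
proof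
  assume h: "(S!a, S!b) \<in> restrictions V E S"
  have "\<exists>i x. (S!a, S!b) = (S!i, x (S!i)) \<and> i < length S \<and> x \<in> aut V E
       \<and> (\<forall>j<i. x (S!j) = S!j) \<and> x (S!i) \<noteq> S!i"
    using h unfolding restrictions_def by (simp only: mem_Collect_eq)
  then obtain i x where i0: "(S!a, S!b) = (S!i, x (S!i))" and i: "i < length S" "x \<in> aut V E"
    "\<forall>j<i. x (S ! j) = S ! j" "x (S ! i) \<noteq> S ! i" by (elim exE conjE) simp
  hence "S!a = S!i" "S!b = x (S!i)" using i0 by auto
  have d: "distinct S" using sch unfolding schedule_def by blast
  have "i = a" using \<open>S!a = S!i\<close> nth_eq_iff_index_eq[OF d a i(1)] by simp
  thus "\<exists>x\<in>aut V E. (\<forall>j<a. x (S!j) = S!j) \<and> x (S!a) = S!b \<and> S!b \<noteq> S!a"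
    using i \<open>S!b = x (S!i)\<close> by (intro bexI[of _ x] conjI) auto
next
  assume "\<exists>x\<in>aut V E. (\<forall>j<a. x (S!j) = S!j) \<and> x (S!a) = S!b \<and> S!b \<noteq> S!a"
  then obtain x where x: "x \<in> aut V E" "\<forall>j<a. x (S!j) = S!j" "x (S!a) = S!b" "S!b \<noteq> S!a" by blast
  have "(S!a, x (S!a)) \<in> restrictions V E S" unfolding restrictions_def mem_Collect_eq
    by (rule exI[of _ a], rule exI[of _ x]) (use a x in simp)
  thus "(S!a, S!b) \<in> restrictions V E S" using x by simp
qed

lemma L_shape:
  assumes sch: "schedule V E S" and m: "(u, w) \<in> restrictions V E S"
  shows "\<exists>a b. a < b \<and> b < length S \<and> u = S ! a \<and> w = S ! b"
proof -
  obtain i x where i: "u = S!i" "w = x (S!i)" "i < length S" "x \<in> aut V E"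
    "\<forall>j<i. x (S ! j) = S ! j" "x (S ! i) \<noteq> S ! i" using m by (auto simp: restrictions_def)
  have SV: "set S = V" "distinct S" using sch by (auto simp: schedule_def)
  have bx: "bij_betw x V V" using i by (auto simp: aut_def)
  have "S!i \<in> V" using i SV by auto
  hence "x (S!i) \<in> set S" using bx SV bij_betwE by blast
  then obtain b where b: "b < length S" "x (S!i) = S!b" by (metis in_set_conv_nth)
  have "b \<noteq> i" using b i by auto
  moreover have "\<not> b < i"
  proof
    assume "b < i"
    hence "x (S!b) = x (S!i)" using i b by auto
    moreover have "S!b \<in> V" "S!i \<in> V" using SV b i by auto
    ultimately have "S!b = S!i" using bx by (auto simp: bij_betw_def inj_on_def)
    thus False using \<open>b \<noteq> i\<close> SV b i by (simp add: nth_eq_iff_index_eq)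
  qed
  ultimately show ?thesis using i b by (intro exI[of _ i] exI[of _ b]) auto
qed

lemma L_trans:
  assumes sch: "schedule V E S" and ac: "a < c" and cb: "c < length S" and b: "b < length S"
    and h1: "(S!a, S!b) \<in> restrictions V E S" and h2: "(S!c, S!b) \<in> restrictions V E S"
  shows "(S!a, S!c) \<in> restrictions V E S"
proof -
  have a: "a < length S" using ac cb by simp
  have SV: "set S = V" "distinct S" using sch by (auto simp: schedule_def)
  obtain x where x: "x \<in> aut V E" "\<forall>j<a. x (S!j) = S!j" "x (S!a) = S!b"
    using L_iff[OF sch a b] h1 by blast
  obtain y where y: "y \<in> aut V E" "\<forall>j<c. y (S!j) = S!j" "y (S!c) = S!b"
    using L_iff[OF sch cb b] h2 by blast
  obtain z where z: "z \<in> aut V E" "\<forall>v\<in>V. z (y v) = v" using aut_inv[OF y(1)] by blast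
  have inV: "\<And>j. j < length S \<Longrightarrow> S!j \<in> V" using SV by auto
  have "z \<circ> x \<in> aut V E" using aut_comp[OF x(1) z(1)] .
  moreover have "\<forall>j<a. (z \<circ> x) (S!j) = S!j"
  proof (intro allI impI)
    fix j assume "j < a"
    hence "x (S!j) = S!j" "y (S!j) = S!j" "j < length S" using x y ac a by auto
    thus "(z \<circ> x) (S!j) = S!j" using z inV by (metis comp_apply)
  qed
  moreover have "(z \<circ> x) (S!a) = S!c" using x y z inV cb by (metis comp_apply)
  moreover have "S!c \<noteq> S!a" using SV ac cb by (simp add: nth_eq_iff_index_eq)
  ultimately show ?thesis using L_iff[OF sch a cb] by blast
qed

theorem theorem2:
  fixes V :: "'a set" and E :: "'a \<Rightarrow> 'a \<Rightarrow> bool" and S :: "'a list"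
  assumes "pattern V E" and "schedule V E S"
  shows "(\<forall>(u, w) \<in> restrictions V E S.
            \<exists>a b. a < b \<and> b < length S \<and> u = S ! a \<and> w = S ! b)
       \<and> (\<forall>f :: 'a \<Rightarrow> real.
            (\<forall>(u, w) \<in> chosen_pairs (restrictions V E S) S. f u > f w)
            \<longrightarrow> (\<forall>(u, w) \<in> restrictions V E S. f u > f w))"
proof (intro conjI allI impI)
  note sch = assms(2)
  let ?L = "restrictions V E S"
  have SV: "set S = V" "distinct S" using sch by (auto simp: schedule_def)
  show P1: "\<forall>(u, w) \<in> ?L. \<exists>a b. a < b \<and> b < length S \<and> u = S ! a \<and> w = S ! b"
    using L_shape[OF sch] by blast
  fix f :: "'a \<Rightarrow> real"
  assume hf: "\<forall>(u, w) \<in> chosen_pairs ?L S. f u > f w"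
  have main: "\<forall>a. (S!a, S!b) \<in> ?L \<longrightarrow> a < length S \<longrightarrow> b < length S \<longrightarrow> f (S!a) > f (S!b)" for b
  proof (induction b rule: less_induct)
    case (less b)
    show ?case
    proof (intro allI impI)
      fix a assume ab: "(S!a, S!b) \<in> ?L" "a < length S" "b < length S"
      define Z where "Z = {z. z < length S \<and> (S ! z, S ! b) \<in> ?L}"
      define c where "c = chosen_index ?L S b"
      have cZ: "c = Max Z" by (simp add: c_def Z_def chosen_index_def)
      have fin: "finite Z" by (simp add: Z_def)
      have aZ: "a \<in> Z" using ab by (simp add: Z_def)
      have cin: "c \<in> Z" using cZ fin aZ Max_in by blast
      have ac: "a \<le> c" using cZ fin aZ Max_ge by blast
      have cL: "(S!c, S!b) \<in> ?L" "c < length S" using cin by (auto simp: Z_def)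
      have "(S!c, S!b) \<in> chosen_pairs ?L S"
        unfolding chosen_pairs_def c_def using ab by blast
      hence fcb: "f (S!c) > f (S!b)" using hf by blast
      have cb: "c < b"
      proof -
        obtain a' b' where "a' < b'" "b' < length S" "S!c = S!a'" "S!b = S!b'"
          using L_shape[OF sch cL(1)] by blast
        thus ?thesis using SV cL ab by (simp add: nth_eq_iff_index_eq)
      qed
      show "f (S!a) > f (S!b)"
      proof (cases "a = c")
        case True thus ?thesis using fcb by simp
      next
        case False
        hence "a < c" using ac by simp
        hence "(S!a, S!c) \<in> ?L" using L_trans[OF sch _ cL(2) ab(3) ab(1) cL(1)] by blast
        hence "f (S!a) > f (S!c)" using less.IH[OF cb] ab cL by blast
        thus ?thesis using fcb by simp
      qed
    qed
  qed
  show "\<forall>(u, w) \<in> ?L. f u > f w"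
  proof (intro ballI, clarify)
    fix u w assume m: "(u, w) \<in> ?L"
    then obtain a b where "a < b" "b < length S" "u = S ! a" "w = S ! b"
      using L_shape[OF sch] by blast
    thus "f u > f w" using main m by auto
  qed
qed

end
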